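(* Let $\Sigma\subset\mathbb C$ be finite, $a\ne b$ in $\Sigma$, and $\sigma,\tau\in G_\Sigma$. For every $c\in\Sigma$ and every $w\in\mathcal A_\Sigma$, $$\frac{d}{dz}\,\mathrm{Li}^{ab}_\Sigma\big(\tau^{-1}(x_cw);\sigma(z)\big)=\left\{\frac{1}{z-(\tau\circ\sigma)^{-1}(c)}-\frac{1}{z-(\tau\circ\sigma)^{-1}(\infty)}\right\}\mathrm{Li}^{ab}_\Sigma\big(\tau^{-1}(w);\sigma(z)\big)$$ (for $z$ with $\sigma(z)$ in the domain of definition, with the convention $1/(z-\infty)=0$). In particular, taking $\tau=\sigma^{-1}$, $\frac{d}{dz}\mathrm{Li}^{ab}_\Sigma(\sigma(x_cw);\sigma(z))=\frac{1}{z-c}\mathrm{Li}^{ab}_\Sigma(\sigma(w);\sigma(z))$, so that $\sum_W\mathrm{Li}^{ab}_\Sigma(\sigma(w);\sigma(z))\,W$ is again a solution of $\frac{dH}{dz}=\big(\sum_{c\in\Sigma}\frac{X_c}{z-c}\big)H$.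
   Context: Let $\Sigma\subset\mathbb C$ be finite. $\mathcal A_\Sigma=\mathbb C\langle x_c: c\in\Sigma\rangle$ is the free non-commutative polynomial algebra on letters $x_c$; monomials are words. The shuffle product $⧢$ is defined recursively by $w ⧢ 1=1 ⧢ w=w$, $l_1w_1 ⧢ l_2w_2=l_1(w_1 ⧢ l_2w_2)+l_2(l_1w_1 ⧢ w_2)$ ($l_i$ letters, $w_i$ words). $\mathcal A^b_\Sigma$ is the span of $1$ and words not ending in $x_b$. For a word $w=x_b^{k_1-1}x_{c_1}\cdots x_b^{k_r-1}x_{c_r}\in\mathcal A^b_\Sigma$ ($k_i\ge1$, $c_i\ne b$), $\mathrm{Li}^b_\Sigma(w;z)=(-1)^r\sum_{m_1>\dots>m_r>0}\prod_{i=1}^r\left(\frac{z-b}{c_i-b}\right)^{m_i-m_{i+1}}m_i^{-k_i}$ ($m_{r+1}=0$) near $b$, $\mathrm{Li}^b_\Sigma(1;z)=1$, extended linearly and continued analytically in $\mathbb C\setminus\Sigma$. For distinct $a,b\in\Sigma$, $\mathrm{Li}^{ab}_\Sigma(\cdot;z)$ is the unique linear $⧢$-homomorphism on $\mathcal A_\Sigma$ agreeing with $\mathrm{Li}^b_\Sigma$ on $\mathcal A^b_\Sigma$ and with $\mathrm{Li}^{ab}_\Sigma(x_b;z)=\log\frac{z-b}{a-b}$ (branches fixed on a simply connected domain in $\mathbb C\setminus\Sigma$). $G_\Sigma$ is the group of Möbius transformations $\sigma\in\mathrm{PSL}(2,\mathbb C)$ with $\sigma(\Sigma\cup\{\infty\})=\Sigma\cup\{\infty\}$.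 It acts on $\mathcal A_\Sigma$ by algebra automorphisms for concatenation determined by $\sigma(x_c)=x_{\sigma(c)}-x_{\sigma(\infty)}$, with the convention $x_\infty:=0$. $\mathbb C\langle\langle X_c\rangle\rangle$ is the non-commutative formal power series algebra; for a word $w=x_{c_1}\cdots x_{c_n}$, $W=X_{c_1}\cdots X_{c_n}$, and $\sum_W$ runs over all words. *)

theory Defs
  imports "HOL-Analysis.Analysis"
begin

text \<open>A word x_{c1}...x_{cn} is the list [c1,...,cn]. A polynomial is a finite
  formal linear combination, represented as a list of (coefficient, word) pairs;
  all functions below are applied linearly, so the representation need not be
  normalised.\<close>

type_synonym ncpoly = "(complex \<times> complex list) list"

definition pmul :: "ncpoly \<Rightarrow> ncpoly \<Rightarrow> ncpoly" where
  "pmul P Q = concat (map (\<lambda>(a, u). map (\<lambda>(b, v). (a * b, u @ v)) Q) P)"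

definition psub :: "ncpoly \<Rightarrow> ncpoly \<Rightarrow> ncpoly" where
  "psub P Q = P @ map (\<lambda>(a, u). (- a, u)) Q"

definition poly_over :: "complex set \<Rightarrow> ncpoly \<Rightarrow> bool" where
  "poly_over S P \<longleftrightarrow> (\<forall>(a, u) \<in> set P. set u \<subseteq> S)"

text \<open>The Riemann sphere is modelled as complex option, None = infinity.\<close>

definition mob_app :: "complex \<Rightarrow> complex \<Rightarrow> complex \<Rightarrow> complex \<Rightarrow> complex option \<Rightarrow> complex option" where
  "mob_app \<alpha> \<beta> \<gamma> \<delta> p =
     (case p of
        None \<Rightarrow> (if \<gamma> = 0 then None else Some (\<alpha> / \<gamma>))
      | Some z \<Rightarrow> (if \<gamma> * z + \<delta> = 0 then None else Some ((\<alpha> * z + \<beta>) / (\<gamma> * z + \<delta>))))"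

definition is_mobius :: "(complex option \<Rightarrow> complex option) \<Rightarrow> bool" where
  "is_mobius f \<longleftrightarrow> (\<exists>\<alpha> \<beta> \<gamma> \<delta>. \<alpha> * \<delta> - \<beta> * \<gamma> \<noteq> 0 \<and> f = mob_app \<alpha> \<beta> \<gamma> \<delta>)"

definition mobius_group :: "complex set \<Rightarrow> (complex option \<Rightarrow> complex option) set" where
  "mobius_group S = {f. is_mobius f \<and> f ` (insert None (Some ` S)) = insert None (Some ` S)}"

text \<open>The letter x_p for a point p of the sphere, with x_\<infinity> = 0.\<close>
fun xl :: "complex option \<Rightarrow> ncpoly" where
  "xl None = []"
| "xl (Some c) = [(1, [c])]"

text \<open>Action on A_S: concatenation-algebra morphism with x_c \<mapsto> x_{f(c)} - x_{f(\<infinity>)}.\<close>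
definition act_word :: "(complex option \<Rightarrow> complex option) \<Rightarrow> complex list \<Rightarrow> ncpoly" where
  "act_word f w = foldr (\<lambda>c P. pmul (psub (xl (f (Some c))) (xl (f None))) P) w [(1, [])]"

definition act :: "(complex option \<Rightarrow> complex option) \<Rightarrow> ncpoly \<Rightarrow> ncpoly" where
  "act f P = concat (map (\<lambda>(a, u). map (\<lambda>(b, v). (a * b, v)) (act_word f u)) P)"

fun rdiff :: "complex \<Rightarrow> complex option \<Rightarrow> complex" where
  "rdiff z None = 0"
| "rdiff z (Some p) = 1 / (z - p)"

fun shuffle :: "'a list \<Rightarrow> 'a list \<Rightarrow> 'a list list" where
  "shuffle [] ys = [ys]"
| "shuffle xs [] = [xs]"
| "shuffle (x # xs) (y # ys) = map ((#) x) (shuffle xs (y # ys)) @ map ((#) y) (shuffle (x # xs) ys)"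

text \<open>blocks b n w decomposes x_b^n w into the list of pairs (k_i, c_i) for
  w = x_b^{k_1-1} x_{c_1} ... x_b^{k_r-1} x_{c_r} (c_i \<noteq> b).\<close>
fun blocks :: "complex \<Rightarrow> nat \<Rightarrow> complex list \<Rightarrow> (nat \<times> complex) list" where
  "blocks b n [] = []"
| "blocks b n (x # xs) = (if x = b then blocks b (Suc n) xs else (Suc n, x) # blocks b 0 xs)"

definition Li_term :: "complex \<Rightarrow> (nat \<times> complex) list \<Rightarrow> nat list \<Rightarrow> complex \<Rightarrow> complex" where
  "Li_term b bl ms z =
     (\<Prod>i<length bl. ((z - b) / (snd (bl ! i) - b)) ^ (ms ! i - (if Suc i < length ms then ms ! Suc i else 0))
                     / of_nat (ms ! i) ^ fst (bl ! i))"

text \<open>Li^b(w;z) for w not ending in x_b, given by the multiple series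
  (-1)^r \<Sum>_{m_1>...>m_r>0} \<Prod>_i ((z-b)/(c_i-b))^{m_i-m_{i+1}} m_i^{-k_i}.\<close>
definition Li_ser :: "complex \<Rightarrow> complex list \<Rightarrow> complex \<Rightarrow> complex" where
  "Li_ser b w z =
     (let bl = blocks b 0 w; r = length bl in
      (-1) ^ r * (\<Sum>\<^sub>\<infinity> ms \<in> {ms. length ms = r \<and> sorted_wrt (>) ms \<and> (\<forall>m \<in> set ms. 0 < m)}.
                    Li_term b bl ms z))"

text \<open>Radius of the disc around b free of other points of S (series converge there).\<close>
definition rad :: "complex set \<Rightarrow> complex \<Rightarrow> real" where
  "rad S b = Min ((\<lambda>c. cmod (c - b)) ` (S - {b}))"

text \<open>Domain data: U is a simply connected domain in \<complex> - S; V is a nonempty open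
  subset of U near b (inside the disc of convergence around b) at which the
  analytic continuation starts.\<close>
definition Li_domain :: "complex set \<Rightarrow> complex \<Rightarrow> complex set \<Rightarrow> complex set \<Rightarrow> bool" where
  "Li_domain S b U V \<longleftrightarrow>
     open U \<and> connected U \<and> simply_connected U \<and> U \<inter> S = {} \<and>
     open V \<and> V \<noteq> {} \<and> V \<subseteq> U \<inter> ball b (rad S b)"

text \<open>L is Li^{ab}_S on U (on words; extended linearly by LiP): holomorphic on U;
  on words not ending in x_b it is the analytic continuation of the series
  (agreement on V); L(x_b) is a branch of log((z-b)/(a-b)); L is a shuffle
  homomorphism.\<close>
definition is_Li_ab :: "complex set \<Rightarrow> complex \<Rightarrow> complex \<Rightarrow> complex set \<Rightarrow> complex set
                        \<Rightarrow> (complex list \<Rightarrow> complex \<Rightarrow> complex) \<Rightarrow> bool" where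
  "is_Li_ab S a b U V L \<longleftrightarrow>
     (\<forall>u. set u \<subseteq> S \<longrightarrow> L u holomorphic_on U) \<and>
     (\<forall>u. set u \<subseteq> S \<and> (u = [] \<or> last u \<noteq> b) \<longrightarrow> (\<forall>z \<in> V. L u z = Li_ser b u z)) \<and>
     (\<forall>z \<in> U. exp (L [b] z) = (z - b) / (a - b)) \<and>
     (\<forall>u v. set u \<subseteq> S \<and> set v \<subseteq> S \<longrightarrow>
        (\<forall>z \<in> U. sum_list (map (\<lambda>x. L x z) (shuffle u v)) = L u z * L v z))"

definition LiP :: "(complex list \<Rightarrow> complex \<Rightarrow> complex) \<Rightarrow> ncpoly \<Rightarrow> complex \<Rightarrow> complex" where
  "LiP L P z = sum_list (map (\<lambda>(a, u). a * L u z) P)"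

end

theory Submission
  imports Defs "HOL-Complex_Analysis.Complex_Analysis"
begin

fun ca :: "complex \<Rightarrow> (nat \<times> complex) list \<Rightarrow> nat \<Rightarrow> complex" where
  "ca b [] m = (if m = 0 then 1 else 0)"
| "ca b ((k, c) # bl) m = (\<Sum>j<m. (c - b) ^ j * ca b bl j) / ((c - b) ^ m * of_nat m ^ k)"

lemma ca_Cons_bound:
  assumes R: "0 < R" "R \<le> norm (c - b)"
  shows "norm (ca b ((k, c) # bl) m) \<le> (\<Sum>j<m. norm (ca b bl j) / R ^ (m - j))"
proof (cases "m = 0")
  case True then show ?thesis by simp
next
  case False
  let ?d = "norm (c - b)"
  have d0: "?d > 0" using R by linarith
  have mk: "1 \<le> real m ^ k" using False by simp
  have "norm (ca b ((k, c) # bl) m) = norm (\<Sum>j<m. (c - b) ^ j * ca b bl j) / (?d ^ m * real m ^ k)"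
    by (simp add: norm_divide norm_mult norm_power)
  also have "\<dots> \<le> norm (\<Sum>j<m. (c - b) ^ j * ca b bl j) / (?d ^ m)"
    using mk d0 False by (intro divide_left_mono) (auto simp: mult_le_cancel_left1 intro!: mult_pos_pos)
  also have "\<dots> \<le> (\<Sum>j<m. ?d ^ j * norm (ca b bl j)) / ?d ^ m"
    using d0 by (intro divide_right_mono) (auto intro!: order.trans[OF norm_sum] simp: norm_mult norm_power)
  also have "\<dots> = (\<Sum>j<m. norm (ca b bl j) / ?d ^ (m - j))"
    unfolding sum_divide_distrib
  proof (intro sum.cong refl)
    fix j assume "j \<in> {..<m}"
    then have "?d ^ m = ?d ^ j * ?d ^ (m - j)" by (simp flip: power_add)
    then show "?d ^ j * norm (ca b bl j) / ?d ^ m = norm (ca b bl j) / ?d ^ (m - j)"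
      using d0 by (simp add: field_simps)
  qed
  also have "\<dots> \<le> (\<Sum>j<m. norm (ca b bl j) / R ^ (m - j))"
    using R d0 by (intro sum_mono divide_left_mono power_mono) (auto intro!: mult_pos_pos)
  finally show ?thesis .
qed

lemma ca_summable:
  assumes "\<forall>(k, c) \<in> set bl. R \<le> norm (c - b)" "0 \<le> s" "s < R"
  shows "summable (\<lambda>m. norm (ca b bl m) * s ^ m)"
  using assms(1)
proof (induction bl)
  case Nil
  have "(\<lambda>m. norm (ca b [] m) * s ^ m) = (\<lambda>m. if m = 0 then 1 else 0)" by auto
  then show ?case using summable_single[of 0 "\<lambda>_. 1::real"] by simp
next
  case (Cons kc bl)
  obtain k c where kc: "kc = (k, c)" by force
  have R0: "0 < R" using assms by linarith
  have Rc: "R \<le> norm (c - b)" using Cons.prems kc by auto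
  define A where "A j = norm (ca b bl j) * s ^ j" for j
  define B where "B i = (if i = 0 then 0 else (s / R) ^ i)" for i
  have sA: "summable (\<lambda>j. norm (A j))" using Cons assms(2) by (simp add: A_def abs_mult)
  have q: "norm (s / R) < 1" using assms R0 by simp
  have sB: "summable (\<lambda>i. norm (B i))"
  proof -
    have "summable (\<lambda>i. (s / R) ^ i)" using summable_geometric[OF q] .
    then show ?thesis by (rule summable_comparison_test[rotated]) (use assms R0 in \<open>auto simp: B_def\<close>)
  qed
  have sC: "summable (\<lambda>m. \<Sum>j\<le>m. A j * B (m - j))"
    using Cauchy_product_sums[OF sA sB] by (rule sums_summable)
  show ?case unfolding kc
  proof (rule summable_comparison_test[OF _ sC], intro exI allI impI)
    fix m :: nat
    have "norm (norm (ca b ((k, c) # bl) m) * s ^ m) = norm (ca b ((k, c) # bl) m) * s ^ m"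
      using assms by simp
    also have "\<dots> \<le> (\<Sum>j<m. norm (ca b bl j) / R ^ (m - j)) * s ^ m"
      using ca_Cons_bound[OF R0 Rc] assms by (intro mult_right_mono) auto
    also have "\<dots> = (\<Sum>j<m. A j * B (m - j))"
      unfolding sum_distrib_right
    proof (intro sum.cong refl)
      fix j assume "j \<in> {..<m}"
      then have "s ^ m = s ^ j * s ^ (m - j)" by (simp flip: power_add)
      then show "norm (ca b bl j) / R ^ (m - j) * s ^ m = A j * B (m - j)"
        using \<open>j \<in> {..<m}\<close> R0 by (simp add: A_def B_def power_divide field_simps)
    qed
    also have "\<dots> = (\<Sum>j\<le>m. A j * B (m - j))"
      by (simp add: lessThan_Suc_atMost[symmetric] B_def)
    finally show "norm (norm (ca b ((k, c) # bl) m) * s ^ m) \<le> (\<Sum>j\<le>m. A j * B (m - j))" .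
  qed
qed


definition Dset :: "nat \<Rightarrow> nat list set" where
  "Dset r = {ms. length ms = r \<and> sorted_wrt (>) ms \<and> (\<forall>m \<in> set ms. 0 < m)}"

definition key :: "nat list \<Rightarrow> nat" where
  "key ms = (case ms of [] \<Rightarrow> 0 | h # _ \<Rightarrow> h)"

definition Eset :: "nat \<Rightarrow> nat \<Rightarrow> nat list set" where
  "Eset r m = {ms \<in> Dset r. key ms = m}"

lemma key_ge: "sorted_wrt (>) ms \<Longrightarrow> x \<in> set ms \<Longrightarrow> x \<le> key ms"
  by (cases ms) (auto simp: key_def)

lemma Eset_0: "Eset 0 m = (if m = 0 then {[]} else {})"
  by (auto simp: Eset_def Dset_def key_def)

lemma Eset_Suc: "Eset (Suc r) m = Cons m ` (\<Union>j<m. Eset r j)"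
proof (intro equalityI subsetI)
  fix ms assume "ms \<in> Eset (Suc r) m"
  then obtain t where ms: "ms = m # t" and t: "length t = r" "sorted_wrt (>) t" "\<forall>x\<in>set t. 0 < x"
    "\<forall>x\<in>set t. x < m" "0 < m"
    by (cases ms) (auto simp: Eset_def Dset_def key_def)
  have "key t < m" using t by (cases t) (auto simp: key_def)
  then show "ms \<in> Cons m ` (\<Union>j<m. Eset r j)" using t ms by (auto simp: Eset_def Dset_def)
next
  fix ms assume "ms \<in> Cons m ` (\<Union>j<m. Eset r j)"
  then obtain t j where ms: "ms = m # t" and j: "j < m" and t: "t \<in> Dset r" "key t = j"
    by (auto simp: Eset_def)
  have "\<forall>x\<in>set t. x < m" using key_ge[of t] t j by (fastforce simp: Dset_def)
  then show "ms \<in> Eset (Suc r) m" using t j ms by (auto simp: Eset_def Dset_def key_def)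
qed

lemma Eset_finite: "finite (Eset r m)"
  by (induction r arbitrary: m) (auto simp: Eset_0 Eset_Suc)

lemma Li_term_Cons:
  assumes "length ms = length bl"
  shows "Li_term b ((k, c) # bl) (m # ms) z =
           ((z - b) / (c - b)) ^ (m - key ms) / of_nat m ^ k * Li_term b bl ms z"
proof -
  have h0: "(if Suc 0 < length (m # ms) then (m # ms) ! Suc 0 else 0) = key ms"
    by (cases ms) (auto simp: key_def)
  let ?F = "\<lambda>i. ((z - b) / (snd (((k, c) # bl) ! i) - b)) ^ ((m # ms) ! i - (if Suc i < length (m # ms) then (m # ms) ! Suc i else 0))
                     / of_nat ((m # ms) ! i) ^ fst (((k, c) # bl) ! i)"
  have "Li_term b ((k, c) # bl) (m # ms) z = (\<Prod>i<Suc (length bl). ?F i)"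
    unfolding Li_term_def by simp
  also have "\<dots> = ?F 0 * (\<Prod>i<length bl. ?F (Suc i))"
    by (rule prod.lessThan_Suc_shift)
  also have "(\<Prod>i<length bl. ?F (Suc i)) = Li_term b bl ms z"
    unfolding Li_term_def
  proof (intro prod.cong refl)
    fix i assume "i \<in> {..<length bl}"
    have "(if Suc (Suc i) < length (m # ms) then (m # ms) ! Suc (Suc i) else 0)
          = (if Suc i < length ms then ms ! Suc i else 0)"
      by (simp only: nth_Cons_Suc length_Cons Suc_less_eq)
    then show "?F (Suc i) = ((z - b) / (snd (bl ! i) - b)) ^ (ms ! i - (if Suc i < length ms then ms ! Suc i else 0)) /
          of_nat (ms ! i) ^ fst (bl ! i)"
      by (simp only: nth_Cons_Suc)
  qed
  also have "?F 0 = ((z - b) / (c - b)) ^ (m - key ms) / of_nat m ^ k"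
    using h0 by simp
  finally show ?thesis .
qed

lemma sum_Eset:
  assumes "\<forall>(k, c) \<in> set bl. c \<noteq> b"
  shows "(\<Sum>ms\<in>Eset (length bl) m. Li_term b bl ms z) = ca b bl m * (z - b) ^ m"
  using assms
proof (induction bl arbitrary: m)
  case Nil
  then show ?case by (simp add: Eset_0 Li_term_def)
next
  case (Cons kc bl)
  obtain k c where kc: "kc = (k, c)" by force
  have cb: "c \<noteq> b" using Cons.prems kc by auto
  have IH: "\<And>j. (\<Sum>ms\<in>Eset (length bl) j. Li_term b bl ms z) = ca b bl j * (z - b) ^ j"
    using Cons by auto
  have disj: "disjoint_family_on (Eset (length bl)) {..<m}"
    by (auto simp: disjoint_family_on_def Eset_def)
  have "(\<Sum>ms\<in>Eset (length (kc # bl)) m. Li_term b (kc # bl) ms z)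
      = (\<Sum>t\<in>(\<Union>j<m. Eset (length bl) j). Li_term b ((k, c) # bl) (m # t) z)"
    by (simp add: Eset_Suc kc sum.reindex)
  also have "\<dots> = (\<Sum>j<m. \<Sum>t\<in>Eset (length bl) j. Li_term b ((k, c) # bl) (m # t) z)"
    by (rule sum.UNION_disjoint_family) (auto simp: Eset_finite disj)
  also have "\<dots> = (\<Sum>j<m. ((z - b) / (c - b)) ^ (m - j) / of_nat m ^ k * (ca b bl j * (z - b) ^ j))"
  proof (intro sum.cong refl)
    fix j
    have "(\<Sum>t\<in>Eset (length bl) j. Li_term b ((k, c) # bl) (m # t) z)
        = (\<Sum>t\<in>Eset (length bl) j. ((z - b) / (c - b)) ^ (m - j) / of_nat m ^ k * Li_term b bl t z)"
      by (intro sum.cong refl) (auto simp: Li_term_Cons Eset_def Dset_def)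
    also have "\<dots> = ((z - b) / (c - b)) ^ (m - j) / of_nat m ^ k * (ca b bl j * (z - b) ^ j)"
      by (simp add: sum_distrib_left[symmetric] IH del: times_divide_eq_left)
    finally show "(\<Sum>t\<in>Eset (length bl) j. Li_term b ((k, c) # bl) (m # t) z) = \<dots>" .
  qed
  also have "\<dots> = ca b (kc # bl) m * (z - b) ^ m"
    unfolding kc ca.simps sum_divide_distrib sum_distrib_right
  proof (intro sum.cong refl)
    fix j assume "j \<in> {..<m}"
    then have e1: "(z - b) ^ m = (z - b) ^ (m - j) * (z - b) ^ j"
      and e2: "(c - b) ^ m = (c - b) ^ (m - j) * (c - b) ^ j" by (simp_all flip: power_add)
    show "((z - b) / (c - b)) ^ (m - j) / of_nat m ^ k * (ca b bl j * (z - b) ^ j) =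
          (c - b) ^ j * ca b bl j / ((c - b) ^ m * of_nat m ^ k) * (z - b) ^ m"
      using cb unfolding e1 e2 by (simp add: power_divide field_simps)
  qed
  finally show ?case .
qed


definition absbl :: "complex \<Rightarrow> (nat \<times> complex) list \<Rightarrow> (nat \<times> complex) list" where
  "absbl b bl = map (\<lambda>(k, c). (k, complex_of_real (norm (c - b)))) bl"

lemma Li_term_norm:
  "Li_term 0 (absbl b bl) ms (of_real (norm (z - b))) = of_real (norm (Li_term b bl ms z))"
  unfolding Li_term_def absbl_def
  by (simp add: prod_norm[symmetric] of_real_prod norm_divide norm_power case_prod_beta)

lemma absbl_props:
  assumes "\<forall>(k, c) \<in> set bl. c \<noteq> b \<and> R \<le> norm (c - b)"
  shows "\<forall>(k, c) \<in> set (absbl b bl). c \<noteq> 0 \<and> R \<le> norm (c - 0)"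
        "length (absbl b bl) = length bl"
  using assms by (auto simp: absbl_def)

lemma Li_has_sum:
  assumes bl: "\<forall>(k, c) \<in> set bl. c \<noteq> b \<and> R \<le> norm (c - b)" and z: "norm (z - b) < R"
  shows "((\<lambda>ms. Li_term b bl ms z) has_sum (\<Sum>m. ca b bl m * (z - b) ^ m)) (Dset (length bl))"
proof -
  let ?r = "length bl"
  let ?x = "norm (z - b)"
  let ?f = "\<lambda>p :: nat \<times> nat list. Li_term b bl (snd p) z"
  have blR: "\<forall>(k, c) \<in> set bl. R \<le> norm (c - b)" and blb: "\<forall>(k, c) \<in> set bl. c \<noteq> b"
    using bl by auto
  have ab: "\<forall>(k, c) \<in> set (absbl b bl). R \<le> norm (c - 0)" "\<forall>(k, c) \<in> set (absbl b bl). c \<noteq> 0"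
    using absbl_props(1)[OF bl] by auto
  have lab: "length (absbl b bl) = length bl" by (simp add: absbl_def)
  define g where "g m = (\<Sum>ms\<in>Eset ?r m. norm (Li_term b bl ms z))" for m
  have g_eq: "complex_of_real (g m) = ca 0 (absbl b bl) m * of_real ?x ^ m" for m
  proof -
    have "complex_of_real (g m) = (\<Sum>ms\<in>Eset ?r m. Li_term 0 (absbl b bl) ms (of_real ?x))"
      by (simp add: g_def Li_term_norm)
    also have "\<dots> = ca 0 (absbl b bl) m * (of_real ?x - 0) ^ m"
      using sum_Eset[OF ab(2), where m = m and z = "of_real ?x"] lab by simp
    finally show ?thesis by simp
  qed
  have g_le: "norm (g m) \<le> norm (ca 0 (absbl b bl) m) * ?x ^ m" for m
  proof -
    have "norm (g m) = norm (complex_of_real (g m))" by simp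
    also have "\<dots> = norm (ca 0 (absbl b bl) m) * ?x ^ m" by (simp add: g_eq norm_mult norm_power)
    finally show ?thesis by simp
  qed
  have sg: "summable g"
    by (rule summable_comparison_test[OF _ ca_summable[OF ab(1), of ?x]]) (use g_le z in auto)
  have g0: "g m \<ge> 0" for m by (simp add: g_def sum_nonneg)
  have abs_sig: "(\<lambda>p. norm (?f p)) summable_on Sigma UNIV (Eset ?r)"
  proof (rule summable_on_SigmaI[where g = g])
    show "\<And>m. m \<in> UNIV \<Longrightarrow> ((\<lambda>y. norm (?f (m, y))) has_sum g m) (Eset ?r m)"
      by (auto simp: g_def Eset_finite intro!: has_sum_finiteI)
    show "g summable_on UNIV" using summable_on_UNIV_nonneg_real_iff[of g] g0 sg by simp
  qed auto
  have sig: "?f summable_on Sigma UNIV (Eset ?r)"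
    using abs_summable_summable[OF abs_sig] .
  have sca: "summable (\<lambda>m. norm (ca b bl m * (z - b) ^ m))"
    using ca_summable[OF blR, of ?x] z by (simp add: norm_mult norm_power)
  have hs: "(?f has_sum (\<Sum>m. ca b bl m * (z - b) ^ m)) (Sigma UNIV (Eset ?r))"
  proof (rule has_sum_SigmaI[where g = "\<lambda>m. ca b bl m * (z - b) ^ m"])
    show "\<And>m. m \<in> UNIV \<Longrightarrow> ((\<lambda>y. ?f (m, y)) has_sum ca b bl m * (z - b) ^ m) (Eset ?r m)"
      using sum_Eset[OF blb] by (auto simp: Eset_finite intro!: has_sum_finiteI)
    show "((\<lambda>m. ca b bl m * (z - b) ^ m) has_sum (\<Sum>m. ca b bl m * (z - b) ^ m)) UNIV"
      by (rule norm_summable_imp_has_sum[OF sca summable_sums[OF summable_norm_cancel[OF sca]]])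
  qed (rule sig)
  define h where "h ms = (key ms, ms)" for ms :: "nat list"
  have inj: "inj_on h (Dset ?r)" by (auto simp: h_def inj_on_def)
  have img: "h ` Dset ?r = Sigma UNIV (Eset ?r)"
    by (auto simp: h_def Eset_def image_iff)
  show ?thesis
    using hs unfolding img[symmetric] has_sum_reindex[OF inj] by (simp add: h_def o_def)
qed

lemma Li_ser_eq:
  assumes bl: "\<forall>(k, c) \<in> set (blocks b 0 w). c \<noteq> b \<and> R \<le> norm (c - b)" and z: "norm (z - b) < R"
  shows "Li_ser b w z = (-1) ^ length (blocks b 0 w) * (\<Sum>m. ca b (blocks b 0 w) m * (z - b) ^ m)"
  using infsumI[OF Li_has_sum[OF bl z]] by (simp add: Li_ser_def Dset_def Let_def)


definition Pser :: "complex \<Rightarrow> (nat \<times> complex) list \<Rightarrow> complex \<Rightarrow> complex" where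
  "Pser b bl x = (\<Sum>m. ca b bl m * x ^ m)"

lemma Pser_summable:
  assumes "\<forall>(k, c) \<in> set bl. R \<le> norm (c - b)" "norm x < R"
  shows "summable (\<lambda>m. norm (ca b bl m * x ^ m))" "summable (\<lambda>m. ca b bl m * x ^ m)"
proof -
  show *: "summable (\<lambda>m. norm (ca b bl m * x ^ m))"
    using ca_summable[OF assms(1), of "norm x"] assms(2) by (simp add: norm_mult norm_power)
  show "summable (\<lambda>m. ca b bl m * x ^ m)" using summable_norm_cancel[OF *] .
qed

lemma Pser_deriv:
  assumes "\<forall>(k, c) \<in> set bl. R \<le> norm (c - b)" "norm x < R"
  shows "(Pser b bl has_field_derivative (\<Sum>n. diffs (ca b bl) n * x ^ n)) (at x)"
  unfolding Pser_def
  by (rule termdiffs_strong'[where K = R]) (use Pser_summable[OF assms(1)] assms(2) in auto)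

lemma diffs_ca_Suc: "diffs (ca b ((Suc k, c) # bl)) n = ca b ((k, c) # bl) (Suc n)"
proof (cases "c = b")
  case True then show ?thesis by (simp add: diffs_def)
next
  case False
  have "of_nat (Suc n) \<noteq> (0::complex)" by (simp only: of_nat_eq_0_iff)
  have gen0: "N \<noteq> 0 \<Longrightarrow> N * (S / (D * (N * M))) = S / (D * M)" for N S D M :: complex
    by (cases "D * M = 0") auto
  then have gen: "of_nat (Suc n) * (S / (D * (of_nat (Suc n) * M))) = S / (D * M)" for S D M :: complex
    using \<open>of_nat (Suc n) \<noteq> (0::complex)\<close> by blast
  show ?thesis
    by (simp only: diffs_def ca.simps power_Suc[of "of_nat (Suc n) :: complex" k] gen)
qed

lemma ca_Cons_0: "ca b ((k, c) # bl) 0 = 0"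
  by simp

lemma Pser_deriv_Suc:
  assumes "\<forall>(k, c) \<in> set ((Suc k, c) # bl). R \<le> norm (c - b)" "norm x < R" "x \<noteq> 0"
  shows "(Pser b ((Suc k, c) # bl) has_field_derivative Pser b ((k, c) # bl) x / x) (at x)"
proof -
  have a2: "\<forall>(k, c) \<in> set ((k, c) # bl). R \<le> norm (c - b)" using assms(1) by auto
  let ?f = "\<lambda>m. ca b ((k, c) # bl) m * x ^ m"
  have s: "summable ?f" using Pser_summable(2)[OF a2 assms(2)] .
  have "(\<Sum>n. diffs (ca b ((Suc k, c) # bl)) n * x ^ n) = (\<Sum>n. ?f (Suc n) / x)"
    using assms(3) by (simp add: diffs_ca_Suc del: ca.simps)
  also have "\<dots> = (\<Sum>n. ?f (Suc n)) / x"
    by (rule suminf_divide) (use s summable_Suc_iff[of ?f] in \<open>simp del: ca.simps\<close>)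
  also have "\<dots> = Pser b ((k, c) # bl) x / x"
    using suminf_split_head[OF s] by (simp add: Pser_def)
  finally show ?thesis using Pser_deriv[OF assms(1,2)] by simp
qed

lemma Pser_deriv_one:
  assumes "\<forall>(k, c) \<in> set ((Suc 0, c) # bl). R \<le> norm (c - b)" "norm x < R" "0 < R"
  shows "(Pser b ((Suc 0, c) # bl) has_field_derivative Pser b bl x / (c - b - x)) (at x)"
proof -
  have a2: "\<forall>(k, c) \<in> set bl. R \<le> norm (c - b)" and Rc: "R \<le> norm (c - b)" using assms(1) by auto
  let ?d = "c - b"
  have d0: "?d \<noteq> 0" using Rc assms(3) by auto
  have q: "norm (x / ?d) < 1" using assms(2) Rc d0 by (simp add: norm_divide field_simps)
  have dx: "?d - x \<noteq> 0" using assms(2) Rc by auto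
  define A where "A j = ca b bl j * x ^ j" for j
  define B where "B i = x ^ i / ?d ^ Suc i" for i
  have sA: "summable (\<lambda>j. norm (A j))" using Pser_summable(1)[OF a2 assms(2)] by (simp add: A_def)
  have Beq: "B i = (x / ?d) ^ i / ?d" for i by (simp add: B_def power_divide)
  have sB: "summable (\<lambda>i. norm (B i))"
    unfolding Beq norm_divide norm_power
    by (intro summable_divide summable_geometric) (use q in \<open>simp add: norm_divide\<close>)
  have sumB: "(\<Sum>i. B i) = 1 / (?d - x)"
  proof -
    have e: "1 - x / ?d = (?d - x) / ?d" using d0 by (simp add: field_simps)
    have "(\<Sum>i. B i) = (\<Sum>i. (x / ?d) ^ i) / ?d" unfolding Beq
      by (rule suminf_divide) (rule summable_geometric[OF q])
    also have "\<dots> = 1 / (1 - x / ?d) / ?d" by (simp add: suminf_geometric[OF q])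
    also have "\<dots> = 1 / (?d - x)" using e d0 dx by simp
    finally show ?thesis .
  qed
  have "(\<Sum>n. diffs (ca b ((Suc 0, c) # bl)) n * x ^ n) = (\<Sum>n. \<Sum>j\<le>n. A j * B (n - j))"
  proof (intro suminf_cong)
    fix n
    have "diffs (ca b ((Suc 0, c) # bl)) n * x ^ n = (\<Sum>j<Suc n. ?d ^ j * ca b bl j) / ?d ^ Suc n * x ^ n"
      unfolding diffs_ca_Suc by (simp del: sum.lessThan_Suc)
    also have "\<dots> = (\<Sum>j\<le>n. A j * B (n - j))"
      unfolding lessThan_Suc_atMost sum_divide_distrib sum_distrib_right
    proof (intro sum.cong refl)
      fix j assume "j \<in> {..n}"
      then have e1: "x ^ n = x ^ j * x ^ (n - j)" and e2: "?d ^ Suc n = ?d ^ j * ?d ^ Suc (n - j)"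
        by (simp_all flip: power_add add: Suc_diff_le)
      show "?d ^ j * ca b bl j / ?d ^ Suc n * x ^ n = A j * B (n - j)"
        unfolding e1 e2 A_def B_def using d0 by (simp add: field_simps)
    qed
    finally show "diffs (ca b ((Suc 0, c) # bl)) n * x ^ n = (\<Sum>j\<le>n. A j * B (n - j))" .
  qed
  also have "\<dots> = (\<Sum>j. A j) * (\<Sum>i. B i)" by (rule Cauchy_product[OF sA sB, symmetric])
  also have "\<dots> = Pser b bl x / (?d - x)" by (simp add: sumB A_def Pser_def)
  finally show ?thesis using Pser_deriv[OF assms(1,2)] by simp
qed


lemma blocks_snd: "(k, c) \<in> set (blocks b n w) \<Longrightarrow> c \<in> set w \<and> c \<noteq> b"
  by (induction w arbitrary: n) (auto split: if_splits)

lemma blocks_Suc: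
  "blocks b (Suc n) w = (case blocks b n w of [] \<Rightarrow> [] | (k, c) # r \<Rightarrow> (Suc k, c) # r)"
  by (induction w arbitrary: n) auto

lemma blocks_ne: "w \<noteq> [] \<Longrightarrow> last w \<noteq> b \<Longrightarrow> blocks b n w \<noteq> []"
  by (induction w arbitrary: n) (auto split: if_splits)

lemma Li_ser_eq_near:
  assumes R: "\<forall>c\<in>set w. c \<noteq> b \<longrightarrow> R \<le> norm (c - b)" and z: "norm (z - b) < R"
  shows "Li_ser b w z = (-1) ^ length (blocks b 0 w) * Pser b (blocks b 0 w) (z - b)"
  unfolding Pser_def
  by (rule Li_ser_eq) (use R z blocks_snd in fastforce)+

lemma Li_ser_deriv:
  assumes R: "\<forall>c\<in>set (p # w'). c \<noteq> b \<longrightarrow> R \<le> norm (c - b)" and z: "norm (z - b) < R" "z \<noteq> b"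
    and last: "last (p # w') \<noteq> b"
  shows "(Li_ser b (p # w') has_field_derivative Li_ser b w' z / (z - p)) (at z)"
proof -
  have R0: "0 < R" using z by (meson norm_ge_zero le_less_trans)
  let ?x = "z - b"
  have x: "norm ?x < R" "?x \<noteq> 0" using z by auto
  have R': "\<forall>c\<in>set w'. c \<noteq> b \<longrightarrow> R \<le> norm (c - b)" using R by auto
  have blR: "\<forall>(k, c) \<in> set (blocks b n u). R \<le> norm (c - b)" if "set u \<subseteq> set (p # w')" for n u
    using R that blocks_snd by fastforce
  define bl where "bl = blocks b 0 (p # w')"
  define r where "r = length bl"
  define G where "G y = (-1) ^ r * Pser b bl (y - b)" for y
  have eqG: "Li_ser b (p # w') y = G y" if "y \<in> ball b R" for y
    using Li_ser_eq_near[OF R, of y] that by (simp add: G_def bl_def r_def dist_norm norm_minus_commute)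
  have w'eq: "Li_ser b w' z = (-1) ^ length (blocks b 0 w') * Pser b (blocks b 0 w') ?x"
    using Li_ser_eq_near[OF R' z(1)] .
  have shift: "((\<lambda>y. Pser b bl' (y - b)) has_field_derivative D) (at z)"
    if "(Pser b bl' has_field_derivative D) (at ?x)" for bl' D
    using that DERIV_shift[of "Pser b bl'" D z "-b"] by simp
  have "(G has_field_derivative Li_ser b w' z / (z - p)) (at z)"
  proof (cases "p = b")
    case True
    then have w'ne: "w' \<noteq> []" and lw': "last w' \<noteq> b" using last by (auto split: if_splits)
    obtain k c r' where bw': "blocks b 0 w' = (k, c) # r'"
      using blocks_ne[OF w'ne lw', of 0] by (metis list.exhaust prod.exhaust)
    have bl: "bl = (Suc k, c) # r'" using True bw' by (simp add: bl_def blocks_Suc)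
    have d: "(Pser b bl has_field_derivative Pser b ((k, c) # r') ?x / ?x) (at ?x)"
      unfolding bl
      by (rule Pser_deriv_Suc[OF _ x(1) x(2)]) (use blR[of "b # w'" 0] bl_def bl True in auto)
    show ?thesis unfolding G_def
      using DERIV_cmult[OF shift[OF d], of "(-1) ^ r"] w'eq True bw' bl
      by (simp add: r_def)
  next
    case False
    have bl: "bl = (Suc 0, p) # blocks b 0 w'" using False by (simp add: bl_def)
    have d: "(Pser b bl has_field_derivative Pser b (blocks b 0 w') ?x / (p - b - ?x)) (at ?x)"
      unfolding bl
      by (rule Pser_deriv_one[OF _ x(1) R0]) (use blR[of "p # w'" 0] bl_def bl in auto)
    have pz: "p - b - ?x = - (z - p)" by simp
    have neg: "- (X / (p - z)) = X / (z - p)" for X :: complex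
      by (metis minus_diff_eq minus_divide_right)
    show ?thesis unfolding G_def
      using DERIV_cmult[OF shift[OF d], of "(-1) ^ r"] w'eq bl unfolding pz
      by (simp add: r_def neg)
  qed
  then show ?thesis
    by (rule has_field_derivative_transform_within_open[where S = "ball b R"])
       (use eqG z in \<open>auto simp: dist_norm norm_minus_commute\<close>)
qed


section \<open>Shuffle combinatorics\<close>

lemma shuffle_set: "x \<in> set (shuffle u v) \<Longrightarrow> set x \<subseteq> set u \<union> set v"
  by (induction u v arbitrary: x rule: shuffle.induct) fastforce+

lemma shuffle_single:
  "y \<in> set (shuffle v [c]) \<Longrightarrow> \<exists>i. y = take i v @ c # drop i v"
proof (induction v arbitrary: y)
  case Nil then show ?case by auto
next
  case (Cons x xs)
  show ?case
  proof (cases "y = c # x # xs")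
    case True then show ?thesis by (intro exI[of _ 0]) simp
  next
    case False
    then obtain y' where "y = x # y'" "y' \<in> set (shuffle xs [c])" using Cons.prems by auto
    with Cons.IH obtain i where "y' = take i xs @ c # drop i xs" by blast
    then show ?thesis using \<open>y = x # y'\<close> by (intro exI[of _ "Suc i"]) simp
  qed
qed

lemma shuffle_single_last: "v @ [c] \<in> set (shuffle v [c])"
  by (induction v) auto

definition tb :: "complex \<Rightarrow> complex list \<Rightarrow> nat" where
  "tb b x = length (takeWhile (\<lambda>y. y = b) (rev x))"

lemma tb_insert:
  assumes "y = take i v @ b # drop i v" "y \<noteq> v @ [b]"
  shows "tb b y \<le> tb b v"
proof -
  have ne: "\<exists>t\<in>set (drop i v). t \<noteq> b"
  proof (rule ccontr)
    assume "\<not> ?thesis"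
    then have "drop i v = replicate (length (drop i v)) b" by (metis replicate_length_same)
    then have "b # drop i v = drop i v @ [b]" by (metis replicate_Suc replicate_append_same)
    then show False using assms by (metis append_assoc append_take_drop_id append_Cons append_Nil)
  qed
  then have "tb b y = length (takeWhile (\<lambda>y. y = b) (rev (drop i v)))"
    using assms(1) by (auto simp: tb_def)
  also have "\<dots> = tb b v"
  proof -
    have "rev v = rev (drop i v) @ rev (take i v)" by (metis append_take_drop_id rev_append)
    moreover obtain t where "t \<in> set (rev (drop i v))" "t \<noteq> b" using ne by auto
    ultimately show ?thesis by (simp add: tb_def takeWhile_append1)
  qed
  finally show ?thesis by simp
qed

lemma tb_snoc: "tb b (v @ [b]) = Suc (tb b v)"
  by (simp add: tb_def)

lemma sum_list_single_nonzero:
  assumes "\<forall>y\<in>set xs. y \<noteq> t \<longrightarrow> f y = 0"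
  shows "sum_list (map f xs) = of_nat (count_list xs t) * (f t :: complex)"
  using assms by (induction xs) (auto simp: algebra_simps)

lemma sum_list_divide_c: "sum_list (map (\<lambda>x. f x / c) xs) = sum_list (map f xs) / (c :: complex)"
  by (induction xs) (auto simp: add_divide_distrib)

lemma DERIV_sum_list:
  assumes "\<And>x. x \<in> set xs \<Longrightarrow> ((\<lambda>y. f x y) has_field_derivative f' x) (at s)"
  shows "((\<lambda>y. sum_list (map (\<lambda>x. f x y) xs)) has_field_derivative sum_list (map f' xs)) (at s)"
  using assms by (induction xs) (auto intro!: derivative_intros)

locale LiCtx =
  fixes S :: "complex set" and a b :: complex and U V :: "complex set"
    and L :: "complex list \<Rightarrow> complex \<Rightarrow> complex"
  assumes finS: "finite S" and aS: "a \<in> S" and bS: "b \<in> S" and a_ne_b: "a \<noteq> b"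
    and dom: "Li_domain S b U V" and isL: "is_Li_ab S a b U V L"
begin

lemma U_props: "open U" "connected U" "U \<inter> S = {}" "open V" "V \<noteq> {}" "V \<subseteq> U" "V \<subseteq> ball b (rad S b)"
  using dom by (auto simp: Li_domain_def)

lemma hol: "set u \<subseteq> S \<Longrightarrow> L u holomorphic_on U"
  using isL by (auto simp: is_Li_ab_def)

lemma onV: "set u \<subseteq> S \<Longrightarrow> u = [] \<or> last u \<noteq> b \<Longrightarrow> z \<in> V \<Longrightarrow> L u z = Li_ser b u z"
  using isL by (auto simp: is_Li_ab_def)

lemma expLb: "z \<in> U \<Longrightarrow> exp (L [b] z) = (z - b) / (a - b)"
  using isL by (auto simp: is_Li_ab_def)

lemma shuf: "set u \<subseteq> S \<Longrightarrow> set v \<subseteq> S \<Longrightarrow> z \<in> U \<Longrightarrow>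
    sum_list (map (\<lambda>x. L x z) (shuffle u v)) = L u z * L v z"
  using isL by (auto simp: is_Li_ab_def)

lemma notS: "z \<in> U \<Longrightarrow> c \<in> S \<Longrightarrow> z \<noteq> c"
  using U_props(3) by auto

lemma rad_props: "0 < rad S b" "c \<in> S \<Longrightarrow> c \<noteq> b \<Longrightarrow> rad S b \<le> norm (c - b)"
proof -
  have fin: "finite ((\<lambda>c. cmod (c - b)) ` (S - {b}))" using finS by simp
  have ne: "(\<lambda>c. cmod (c - b)) ` (S - {b}) \<noteq> {}" using aS a_ne_b by auto
  show "0 < rad S b" unfolding rad_def using fin ne by (subst Min_gr_iff) auto
  show "c \<in> S \<Longrightarrow> c \<noteq> b \<Longrightarrow> rad S b \<le> norm (c - b)" unfolding rad_def using fin by (intro Min_le) auto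
qed

lemma L_nil: "z \<in> U \<Longrightarrow> L [] z = 1"
proof -
  have "Li_ser b [] z = 1" if "z \<in> V" for z
  proof -
    have zb: "norm (z - b) < rad S b" using that U_props(7) by (auto simp: dist_norm norm_minus_commute)
    have e: "(\<lambda>m. ca b [] m * (z - b) ^ m) = (\<lambda>m. if m = 0 then 1 else 0)" by auto
    have "(\<lambda>m. ca b [] m * (z - b) ^ m) sums 1" unfolding e using sums_single[of 0 "\<lambda>_. 1::complex"] by simp
    then show ?thesis using Li_ser_eq_near[of "[]" b "rad S b" z] zb by (simp add: Pser_def sums_iff)
  qed
  then have V1: "z \<in> V \<Longrightarrow> L [] z = 1" for z using onV[of "[]" z] by simp
  assume "z \<in> U"
  show "L [] z = 1"
    by (rule analytic_continuation_open[where s = V and s' = U and f = "L []" and g = "\<lambda>_. 1"])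
       (use U_props hol[of "[]"] V1 \<open>z \<in> U\<close> in auto)
qed

lemma deriv_base:
  assumes u: "set (p # w') \<subseteq> S" and last: "last (p # w') \<noteq> b" and s: "s \<in> U"
  shows "deriv (L (p # w')) s = L w' s / (s - p)"
proof -
  let ?R = "rad S b"
  have Rc: "\<forall>c\<in>set (p # w'). c \<noteq> b \<longrightarrow> ?R \<le> norm (c - b)" using u rad_props by auto
  have onVd: "deriv (L (p # w')) z = L w' z / (z - p)" if z: "z \<in> V" for z
  proof -
    have zb: "norm (z - b) < ?R" "z \<noteq> b" using z U_props(6,7) notS[OF _ bS]
      by (auto simp: dist_norm norm_minus_commute)
    have d: "(Li_ser b (p # w') has_field_derivative Li_ser b w' z / (z - p)) (at z)"
      by (rule Li_ser_deriv[OF Rc zb last])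
    have w'ok: "w' = [] \<or> last w' \<noteq> b" using last by auto
    have "(L (p # w') has_field_derivative Li_ser b w' z / (z - p)) (at z)"
      by (rule has_field_derivative_transform_within_open[OF d U_props(4) z])
         (use onV[OF u _] last in auto)
    then show ?thesis using onV[of w' z] u w'ok z by (simp add: DERIV_imp_deriv)
  qed
  have pU: "p \<notin> U" using u notS by auto
  show ?thesis
    by (rule analytic_continuation_open[where s = V and s' = U and f = "deriv (L (p # w'))"
          and g = "\<lambda>s. L w' s / (s - p)"])
       (use U_props onVd s pU hol[OF u] hol[of w'] u in \<open>auto intro!: holomorphic_intros holomorphic_deriv\<close>)
qed

lemma deriv_b: assumes s: "s \<in> U" shows "deriv (L [b]) s = 1 / (s - b)"
proof -
  have bS': "set [b] \<subseteq> S" using bS by simp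
  have d1: "(L [b] has_field_derivative deriv (L [b]) s) (at s)"
    using holomorphic_derivI[OF hol[OF bS'] U_props(1) s] .
  have d2: "((\<lambda>z. exp (L [b] z)) has_field_derivative exp (L [b] s) * deriv (L [b]) s) (at s)"
    using DERIV_chain2[OF DERIV_exp d1] by simp
  have d3: "((\<lambda>z. (z - b) / (a - b)) has_field_derivative 1 / (a - b)) (at s)"
    using a_ne_b by (auto intro!: derivative_eq_intros)
  have d4: "((\<lambda>z. exp (L [b] z)) has_field_derivative 1 / (a - b)) (at s)"
    by (rule has_field_derivative_transform_within_open[OF d3 U_props(1) s]) (simp add: expLb)
  have "exp (L [b] s) * deriv (L [b]) s = 1 / (a - b)" using DERIV_unique[OF d2 d4] .
  then have "(s - b) / (a - b) * deriv (L [b]) s = 1 / (a - b)" using expLb[OF s] by simp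
  moreover have "s \<noteq> b" using notS[OF s bS] .
  moreover have "a - b \<noteq> 0" using a_ne_b by simp
  ultimately show ?thesis by (simp add: field_simps)
qed

lemma deriv_shuffle:
  assumes u: "set u \<subseteq> S" and v: "set v \<subseteq> S" and s: "s \<in> U"
  shows "sum_list (map (\<lambda>x. deriv (L x) s) (shuffle u v)) = deriv (L u) s * L v s + L u s * deriv (L v) s"
proof -
  have xs: "set x \<subseteq> S" if "x \<in> set (shuffle u v)" for x using shuffle_set[OF that] u v by auto
  have d1: "((\<lambda>y. sum_list (map (\<lambda>x. L x y) (shuffle u v))) has_field_derivative
            sum_list (map (\<lambda>x. deriv (L x) s) (shuffle u v))) (at s)"
    by (rule DERIV_sum_list) (use holomorphic_derivI[OF hol U_props(1) s] xs in blast)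
  have d2: "((\<lambda>y. L u y * L v y) has_field_derivative deriv (L u) s * L v s + L u s * deriv (L v) s) (at s)"
    using DERIV_mult[OF holomorphic_derivI[OF hol[OF u] U_props(1) s] holomorphic_derivI[OF hol[OF v] U_props(1) s]]
    by (simp add: mult.commute)
  have d3: "((\<lambda>y. sum_list (map (\<lambda>x. L x y) (shuffle u v))) has_field_derivative
            deriv (L u) s * L v s + L u s * deriv (L v) s) (at s)"
    by (rule has_field_derivative_transform_within_open[OF d2 U_props(1) s]) (simp add: shuf[OF u v])
  show ?thesis using DERIV_unique[OF d1 d3] .
qed

definition rho :: "complex list \<Rightarrow> complex \<Rightarrow> complex" where
  "rho x s = (case x of [] \<Rightarrow> 0 | p # w \<Rightarrow> L w s / (s - p))"

lemma rho_shuffle: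
  assumes u: "set u \<subseteq> S" and v: "set v \<subseteq> S" and s: "s \<in> U"
  shows "sum_list (map (\<lambda>x. rho x s) (shuffle u v)) = rho u s * L v s + L u s * rho v s"
  using u v
proof (induction u v rule: shuffle.induct)
  case (1 ys)
  then show ?case using L_nil[OF s] by (simp add: rho_def)
next
  case (2 x xs)
  then show ?case using L_nil[OF s] by (simp add: rho_def)
next
  case (3 x xs y ys)
  have "sum_list (map (\<lambda>x. rho x s) (shuffle (x # xs) (y # ys)))
      = sum_list (map (\<lambda>w. L w s / (s - x)) (shuffle xs (y # ys)))
        + sum_list (map (\<lambda>w. L w s / (s - y)) (shuffle (x # xs) ys))"
    by (simp add: rho_def o_def)
  also have "\<dots> = L xs s * L (y # ys) s / (s - x) + L (x # xs) s * L ys s / (s - y)"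
    unfolding sum_list_divide_c using 3(3,4) s by (simp add: shuf)
  also have "\<dots> = rho (x # xs) s * L (y # ys) s + L (x # xs) s * rho (y # ys) s"
    by (simp add: rho_def)
  finally show ?case .
qed

lemma deriv_main:
  assumes "set x \<subseteq> S" "s \<in> U"
  shows "deriv (L x) s = rho x s"
  using assms
proof (induction "tb b x" arbitrary: x rule: less_induct)
  case less
  show ?case
  proof (cases "x = []")
    case True
    have "((\<lambda>_. 1) has_field_derivative 0) (at s)" by simp
    then have "(L [] has_field_derivative 0) (at s)"
      by (rule has_field_derivative_transform_within_open[OF _ U_props(1) less.prems(2)]) (simp add: L_nil)
    then show ?thesis using True by (simp add: DERIV_imp_deriv rho_def)
  next
    case False
    then obtain p w' where x: "x = p # w'" by (cases x) auto
    show ?thesis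
    proof (cases "last x = b")
      case False
      then show ?thesis using deriv_base[of p w' s] less.prems x by (simp add: rho_def)
    next
      case True
      obtain v where v: "x = v @ [b]" using True \<open>x \<noteq> []\<close> by (metis append_butlast_last_id)
      have vS: "set v \<subseteq> S" using less.prems v by auto
      have bS': "set [b] \<subseteq> S" using bS by simp
      define f where "f y = deriv (L y) s - rho y s" for y
      have fv: "f v = 0" using less.hyps[of v] vS less.prems v tb_snoc by (simp add: f_def)
      have fb: "f [b] = 0" using deriv_b[OF less.prems(2)] L_nil[OF less.prems(2)] by (simp add: f_def rho_def)
      have "sum_list (map f (shuffle v [b])) = f v * L [b] s + L v s * f [b]"
        unfolding f_def sum_list_subtractf
        using deriv_shuffle[OF vS bS' less.prems(2)] rho_shuffle[OF vS bS' less.prems(2)]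
        by (simp add: algebra_simps)
      then have sum0: "sum_list (map f (shuffle v [b])) = 0" using fv fb by simp
      have others: "\<forall>y\<in>set (shuffle v [b]). y \<noteq> v @ [b] \<longrightarrow> f y = 0"
      proof (intro ballI impI)
        fix y assume y: "y \<in> set (shuffle v [b])" "y \<noteq> v @ [b]"
        obtain i where yi: "y = take i v @ b # drop i v" using shuffle_single[OF y(1)] by blast
        have "tb b y < tb b x" using tb_insert[OF yi y(2)] v tb_snoc by simp
        moreover have "set y \<subseteq> S" using shuffle_set[OF y(1)] vS bS by auto
        ultimately show "f y = 0" using less.hyps less.prems(2) by (simp add: f_def)
      qed
      have "of_nat (count_list (shuffle v [b]) (v @ [b])) * f (v @ [b]) = 0"
        using sum_list_single_nonzero[OF others] sum0 by simp
      moreover have "count_list (shuffle v [b]) (v @ [b]) \<noteq> 0"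
        using shuffle_single_last[of v b] by (simp add: count_list_0_iff)
      ultimately have "f x = 0" using v by simp
      then show ?thesis by (simp add: f_def)
    qed
  qed
qed

lemma deriv_letter:
  assumes "set w \<subseteq> S" "p \<in> S" "s \<in> U"
  shows "(L (p # w) has_field_derivative L w s / (s - p)) (at s)"
proof -
  have "set (p # w) \<subseteq> S" using assms by simp
  from holomorphic_derivI[OF hol[OF this] U_props(1) assms(3)] deriv_main[OF this assms(3)]
  show ?thesis by (simp add: rho_def)
qed

end


section \<open>Moebius transformations\<close>

lemma mob_inv:
  assumes "\<alpha> * \<delta> - \<beta> * \<gamma> \<noteq> 0"
  shows "mob_app \<delta> (-\<beta>) (-\<gamma>) \<alpha> (mob_app \<alpha> \<beta> \<gamma> \<delta> p) = p"
proof (cases p)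
  case None
  then show ?thesis using assms
    by (cases "\<gamma> = 0") (auto simp: mob_app_def field_simps)
next
  case (Some z)
  show ?thesis
  proof (cases "\<gamma> * z + \<delta> = 0")
    case True
    then have g: "\<gamma> \<noteq> 0" using assms by auto
    have d: "\<delta> = - (\<gamma> * z)" using True by (metis add.commute add_eq_0_iff)
    then show ?thesis using True Some g by (auto simp: mob_app_def field_simps)
  next
    case False
    define w where "w = (\<alpha> * z + \<beta>) / (\<gamma> * z + \<delta>)"
    have e1: "- \<gamma> * w + \<alpha> = (\<alpha> * \<delta> - \<beta> * \<gamma>) / (\<gamma> * z + \<delta>)"
      using False by (simp add: w_def field_simps)
    have e2: "\<delta> * w + - \<beta> = (\<alpha> * \<delta> - \<beta> * \<gamma>) * z / (\<gamma> * z + \<delta>)"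
      using False by (simp add: w_def field_simps)
    have "mob_app \<alpha> \<beta> \<gamma> \<delta> p = Some w" using Some False by (simp add: mob_app_def w_def)
    moreover have "mob_app \<delta> (-\<beta>) (-\<gamma>) \<alpha> (Some w) = Some z"
      using e1 e2 False assms by (simp add: mob_app_def)
    ultimately show ?thesis using Some by simp
  qed
qed

lemma mobius_bij:
  assumes "is_mobius f" shows "bij f"
proof -
  obtain \<alpha> \<beta> \<gamma> \<delta> where d: "\<alpha> * \<delta> - \<beta> * \<gamma> \<noteq> 0" and f: "f = mob_app \<alpha> \<beta> \<gamma> \<delta>"
    using assms by (auto simp: is_mobius_def)
  have d': "\<delta> * \<alpha> - (-\<beta>) * (-\<gamma>) \<noteq> 0" using d by (simp add: algebra_simps)
  have "mob_app \<alpha> \<beta> \<gamma> \<delta> (mob_app \<delta> (-\<beta>) (-\<gamma>) \<alpha> p) = p" for p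
    using mob_inv[OF d', of p] by simp
  then show ?thesis unfolding f
    by (intro o_bij[where g = "mob_app \<delta> (-\<beta>) (-\<gamma>) \<alpha>"]) (auto simp: mob_inv[OF d] fun_eq_iff)
qed

lemma mob_deriv_rdiff:
  assumes det: "\<alpha> * \<delta> - \<beta> * \<gamma> \<noteq> 0" and D: "\<gamma> * z + \<delta> \<noteq> 0"
    and s: "s = (\<alpha> * z + \<beta>) / (\<gamma> * z + \<delta>)" and u: "u \<noteq> Some z"
  shows "(\<alpha> * \<delta> - \<beta> * \<gamma>) / (\<gamma> * z + \<delta>) ^ 2 * rdiff s (mob_app \<alpha> \<beta> \<gamma> \<delta> u)
         = rdiff z u - \<gamma> / (\<gamma> * z + \<delta>)"
proof (cases u)
  case None
  show ?thesis
  proof (cases "\<gamma> = 0")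
    case True then show ?thesis using None by (simp add: mob_app_def)
  next
    case False
    have e: "s - \<alpha> / \<gamma> = - (\<alpha> * \<delta> - \<beta> * \<gamma>) / (\<gamma> * (\<gamma> * z + \<delta>))"
      using False D by (simp add: s field_simps)
    have r: "rdiff s (mob_app \<alpha> \<beta> \<gamma> \<delta> u) = - (\<gamma> * (\<gamma> * z + \<delta>)) / (\<alpha> * \<delta> - \<beta> * \<gamma>)"
      using None False e det D by (simp add: mob_app_def) (metis minus_diff_eq minus_divide_right)
    have "(\<alpha> * \<delta> - \<beta> * \<gamma>) / (\<gamma> * z + \<delta>) ^ 2 * (- (\<gamma> * (\<gamma> * z + \<delta>)) / (\<alpha> * \<delta> - \<beta> * \<gamma>))
          = - \<gamma> / (\<gamma> * z + \<delta>)"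
    proof -
      have gen: "K \<noteq> 0 \<Longrightarrow> Dn \<noteq> 0 \<Longrightarrow> K / Dn ^ 2 * (- (g * Dn) / K) = - g / Dn" for K Dn g :: complex
        by (simp add: power2_eq_square field_simps)
      show ?thesis using gen[OF det D] .
    qed
    then show ?thesis using None r by simp
  qed
next
  case (Some v)
  have zv: "z - v \<noteq> 0" using u Some by auto
  show ?thesis
  proof (cases "\<gamma> * v + \<delta> = 0")
    case True
    then have g: "\<gamma> \<noteq> 0" using det by auto
    have "z - v = (\<gamma> * z + \<delta>) / \<gamma>" using True g by (simp add: field_simps)
    then show ?thesis using Some True g D by (simp add: mob_app_def)
  next
    case False
    have e: "s - (\<alpha> * v + \<beta>) / (\<gamma> * v + \<delta>) = (\<alpha> * \<delta> - \<beta> * \<gamma>) * (z - v) / ((\<gamma> * z + \<delta>) * (\<gamma> * v + \<delta>))"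
      using False D by (simp add: s field_simps)
    have "(\<alpha> * \<delta> - \<beta> * \<gamma>) / (\<gamma> * z + \<delta>) ^ 2 * (1 / (s - (\<alpha> * v + \<beta>) / (\<gamma> * v + \<delta>)))
          = (\<gamma> * v + \<delta>) / ((\<gamma> * z + \<delta>) * (z - v))"
    proof -
      have gen: "K \<noteq> 0 \<Longrightarrow> Dn \<noteq> 0 \<Longrightarrow> Dv \<noteq> 0 \<Longrightarrow> Z \<noteq> 0 \<Longrightarrow>
                 K / Dn ^ 2 * (1 / (K * Z / (Dn * Dv))) = Dv / (Dn * Z)" for K Dn Dv Z :: complex
        by (simp add: power2_eq_square field_simps)
      show ?thesis unfolding e using gen[OF det D False zv] .
    qed
    also have "\<dots> = 1 / (z - v) - \<gamma> / (\<gamma> * z + \<delta>)"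
      using D zv by (simp add: field_simps)
    finally show ?thesis using Some False by (simp add: mob_app_def)
  qed
qed


section \<open>Linear algebra of LiP and act\<close>

definition Lx :: "(complex list \<Rightarrow> complex \<Rightarrow> complex) \<Rightarrow> complex option \<Rightarrow> ncpoly \<Rightarrow> complex \<Rightarrow> complex" where
  "Lx L p Q y = (case p of None \<Rightarrow> 0 | Some p \<Rightarrow> sum_list (map (\<lambda>(\<beta>, v). \<beta> * L (p # v) y) Q))"

lemma LiP_append: "LiP L (P @ Q) y = LiP L P y + LiP L Q y"
  by (simp add: LiP_def)

lemma LiP_scale: "LiP L (map (\<lambda>(b, v). (\<alpha> * b, v)) Q) y = \<alpha> * LiP L Q y"
  by (induction Q) (auto simp: LiP_def algebra_simps)

lemma LiP_act: "LiP L (act f P) y = sum_list (map (\<lambda>(\<alpha>, u). \<alpha> * LiP L (act_word f u) y) P)"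
proof (induction P)
  case Nil then show ?case by (simp add: act_def LiP_def)
next
  case (Cons x P)
  obtain \<alpha> u where x: "x = (\<alpha>, u)" by force
  have "act f (x # P) = map (\<lambda>(b, v). (\<alpha> * b, v)) (act_word f u) @ act f P"
    by (simp add: act_def x)
  then show ?case using Cons by (simp add: LiP_append LiP_scale x)
qed

lemma act_word_Cons: "act_word f (c # u) = pmul (psub (xl (f (Some c))) (xl (f None))) (act_word f u)"
  by (simp add: act_word_def)

lemma LiP_neg: "LiP L (map (\<lambda>(b, v). (- b, v)) Q) y = - LiP L Q y"
  by (induction Q) (auto simp: LiP_def algebra_simps)

lemma pmul_Cons: "pmul ((a, u) # A) Q = map (\<lambda>(b, v). (a * b, u @ v)) Q @ pmul A Q"
  by (simp add: pmul_def)

lemma LiP_xl: "LiP L (pmul (xl p) Q) y = Lx L p Q y"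
proof (cases p)
  case None then show ?thesis by (simp add: pmul_def LiP_def Lx_def)
next
  case (Some p')
  have "LiP L (map (\<lambda>(b, v). (1 * b, [p'] @ v)) Q) y = sum_list (map (\<lambda>(\<beta>, v). \<beta> * L (p' # v) y) Q)"
    by (induction Q) (auto simp: LiP_def)
  then show ?thesis using Some by (simp add: pmul_Cons Lx_def pmul_def)
qed

lemma LiP_pmul_neg: "LiP L (pmul (map (\<lambda>(a, u). (- a, u)) A) Q) y = - LiP L (pmul A Q) y"
proof (induction A)
  case Nil then show ?case by (simp add: pmul_def LiP_def)
next
  case (Cons x A)
  obtain a u where x: "x = (a, u)" by force
  have "LiP L (map (\<lambda>(b, v). (- a * b, u @ v)) Q) y = - LiP L (map (\<lambda>(b, v). (a * b, u @ v)) Q) y"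
    by (induction Q) (auto simp: LiP_def)
  then show ?case using Cons by (simp add: x pmul_Cons LiP_append)
qed

lemma pmul_append: "pmul (A @ B) Q = pmul A Q @ pmul B Q"
  by (simp add: pmul_def)

lemma LiP_pmul_xl: "LiP L (pmul (psub (xl p) (xl q)) Q) y = Lx L p Q y - Lx L q Q y"
  by (simp add: psub_def pmul_append LiP_append LiP_pmul_neg LiP_xl)

lemma poly_over_pmul: "poly_over S A \<Longrightarrow> poly_over S B \<Longrightarrow> poly_over S (pmul A B)"
  unfolding poly_over_def pmul_def by fastforce

lemma poly_over_psub: "poly_over S A \<Longrightarrow> poly_over S B \<Longrightarrow> poly_over S (psub A B)"
  by (auto simp: poly_over_def psub_def)

lemma poly_over_xl: "p \<in> insert None (Some ` S) \<Longrightarrow> poly_over S (xl p)"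
  by (auto simp: poly_over_def)

lemma poly_over_act_word:
  assumes "f ` insert None (Some ` S) \<subseteq> insert None (Some ` S)" "set u \<subseteq> S"
  shows "poly_over S (act_word f u)"
  using assms(2)
proof (induction u)
  case Nil then show ?case by (simp add: act_word_def poly_over_def)
next
  case (Cons c u)
  have "f (Some c) \<in> insert None (Some ` S)" "f None \<in> insert None (Some ` S)" using assms(1) Cons.prems by auto
  then show ?case using Cons
    by (simp add: act_word_Cons poly_over_pmul poly_over_psub poly_over_xl)
qed

lemma poly_over_act:
  assumes "f ` insert None (Some ` S) \<subseteq> insert None (Some ` S)" "poly_over S P"
  shows "poly_over S (act f P)"
  using assms(2) poly_over_act_word[OF assms(1)]
  by (fastforce simp: poly_over_def act_def)

context LiCtx
begin

lemma Lx_deriv: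
  assumes p: "p \<in> insert None (Some ` S)" and Q: "poly_over S Q" and s: "s \<in> U"
  shows "((\<lambda>y. Lx L p Q y) has_field_derivative rdiff s p * LiP L Q s) (at s)"
proof (cases p)
  case None then show ?thesis by (simp add: Lx_def)
next
  case (Some p')
  have p'S: "p' \<in> S" using p Some by auto
  have d: "((\<lambda>y. sum_list (map (\<lambda>x. (\<lambda>x y. fst x * L (p' # snd x) y) x y) Q)) has_field_derivative
          sum_list (map (\<lambda>x. fst x * (L (snd x) s / (s - p'))) Q)) (at s)"
  proof (rule DERIV_sum_list)
    fix x assume x: "x \<in> set Q"
    have "set (snd x) \<subseteq> S" using Q x unfolding poly_over_def by (cases x) fastforce
    then show "((\<lambda>y. (\<lambda>x y. fst x * L (p' # snd x) y) x y) has_field_derivative fst x * (L (snd x) s / (s - p'))) (at s)"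
      using DERIV_cmult[OF deriv_letter[OF _ p'S s], of "snd x" "fst x"] by simp
  qed
  have e1: "Lx L p Q y = sum_list (map (\<lambda>x. fst x * L (p' # snd x) y) Q)" for y
    unfolding Lx_def Some by (induction Q) auto
  have e2: "sum_list (map (\<lambda>x. fst x * (L (snd x) s / (s - p'))) Q) = rdiff s p * LiP L Q s"
    unfolding LiP_def Some by (induction Q) (auto simp: add_divide_distrib)
  show ?thesis using d unfolding e1 e2 by simp
qed

lemma G_deriv:
  assumes f: "f ` insert None (Some ` S) \<subseteq> insert None (Some ` S)" and c: "c \<in> S"
    and w: "poly_over S w" and s: "s \<in> U"
  shows "((\<lambda>y. LiP L (act f (pmul [(1, [c])] w)) y) has_field_derivative
          (rdiff s (f (Some c)) - rdiff s (f None)) * LiP L (act f w) s) (at s)"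
proof -
  let ?p = "f (Some c)" and ?q = "f None"
  have pT: "?p \<in> insert None (Some ` S)" and qT: "?q \<in> insert None (Some ` S)" using f c by auto
  have pm: "pmul [(1, [c])] w = map (\<lambda>(b, v). (b, c # v)) w" by (simp add: pmul_def case_prod_beta)
  have eq: "LiP L (act f (pmul [(1, [c])] w)) y =
        sum_list (map (\<lambda>x. (\<lambda>(\<alpha>, u) y. \<alpha> * (Lx L ?p (act_word f u) y - Lx L ?q (act_word f u) y)) x y) w)" for y
    unfolding pm LiP_act by (simp add: o_def case_prod_beta act_word_Cons LiP_pmul_xl)
  have d: "((\<lambda>y. sum_list (map (\<lambda>x. (\<lambda>(\<alpha>, u) y. \<alpha> * (Lx L ?p (act_word f u) y - Lx L ?q (act_word f u) y)) x y) w))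
        has_field_derivative sum_list (map (\<lambda>(\<alpha>, u). \<alpha> * ((rdiff s ?p - rdiff s ?q) * LiP L (act_word f u) s)) w)) (at s)"
  proof (rule DERIV_sum_list)
    fix x assume x: "x \<in> set w"
    obtain \<alpha> u where xu: "x = (\<alpha>, u)" by force
    have uS: "set u \<subseteq> S" using w x xu by (auto simp: poly_over_def)
    have Q: "poly_over S (act_word f u)" by (rule poly_over_act_word[OF f uS])
    show "((\<lambda>y. (\<lambda>(\<alpha>, u) y. \<alpha> * (Lx L ?p (act_word f u) y - Lx L ?q (act_word f u) y)) x y) has_field_derivative
          (\<lambda>(\<alpha>, u). \<alpha> * ((rdiff s ?p - rdiff s ?q) * LiP L (act_word f u) s)) x) (at s)"
      using DERIV_cmult[OF DERIV_diff[OF Lx_deriv[OF pT Q s] Lx_deriv[OF qT Q s]], of \<alpha>] xu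
      by (simp add: algebra_simps)
  qed
  have "sum_list (map (\<lambda>(\<alpha>, u). \<alpha> * ((rdiff s ?p - rdiff s ?q) * LiP L (act_word f u) s)) w)
      = (rdiff s ?p - rdiff s ?q) * LiP L (act f w) s"
  proof -
    have "sum_list (map (\<lambda>(\<alpha>, u). \<alpha> * (K * LiP L (act_word f u) s)) w')
        = K * sum_list (map (\<lambda>(\<alpha>, u). \<alpha> * LiP L (act_word f u) s) w')" for K w'
      by (induction w') (auto simp: algebra_simps)
    then show ?thesis unfolding LiP_act by simp
  qed
  with d eq show ?thesis by simp
qed

lemma chain_main:
  assumes sig: "\<sigma> \<in> mobius_group S"
    and f: "f ` insert None (Some ` S) \<subseteq> insert None (Some ` S)" and c: "c \<in> S"
    and w: "poly_over S w" and zs: "\<sigma> (Some z) = Some s" and s: "s \<in> U"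
    and up: "\<sigma> up = f (Some c)" and uq: "\<sigma> uq = f None"
  shows "((\<lambda>y. LiP L (act f (pmul [(1, [c])] w)) (the (\<sigma> (Some y)))) has_field_derivative
          ((rdiff z up - rdiff z uq) * LiP L (act f w) s)) (at z)"
proof -
  obtain \<alpha> \<beta> \<gamma> \<delta> where det: "\<alpha> * \<delta> - \<beta> * \<gamma> \<noteq> 0" and sd: "\<sigma> = mob_app \<alpha> \<beta> \<gamma> \<delta>"
    using sig by (auto simp: mobius_group_def is_mobius_def)
  have D: "\<gamma> * z + \<delta> \<noteq> 0" and sv: "s = (\<alpha> * z + \<beta>) / (\<gamma> * z + \<delta>)"
    using zs by (auto simp: sd mob_app_def split: if_splits)
  let ?T = "insert None (Some ` S)"
  have sT: "Some s \<notin> ?T" using s U_props(3) by auto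
  have fcT: "f (Some c) \<in> ?T" and fnT: "f None \<in> ?T" using f c by auto
  have upz: "up \<noteq> Some z"
  proof
    assume "up = Some z"
    then have "f (Some c) = Some s" using up zs by simp
    then show False using fcT sT by simp
  qed
  have uqz: "uq \<noteq> Some z"
  proof
    assume "uq = Some z"
    then have "f None = Some s" using uq zs by simp
    then show False using fnT sT by simp
  qed
  let ?G = "\<lambda>y. LiP L (act f (pmul [(1, [c])] w)) y"
  let ?g = "\<lambda>y. (\<alpha> * y + \<beta>) / (\<gamma> * y + \<delta>)"
  have dG: "(?G has_field_derivative (rdiff s (f (Some c)) - rdiff s (f None)) * LiP L (act f w) s) (at (?g z))"
    using G_deriv[OF f c w s] sv by simp
  have dg: "(?g has_field_derivative (\<alpha> * \<delta> - \<beta> * \<gamma>) / (\<gamma> * z + \<delta>) ^ 2) (at z)"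
    using D by (auto intro!: derivative_eq_intros simp: power2_eq_square algebra_simps)
  have dc: "((\<lambda>y. ?G (?g y)) has_field_derivative
        (rdiff s (f (Some c)) - rdiff s (f None)) * LiP L (act f w) s * ((\<alpha> * \<delta> - \<beta> * \<gamma>) / (\<gamma> * z + \<delta>) ^ 2)) (at z)"
    by (rule DERIV_chain2[OF dG dg])
  have val: "(rdiff s (f (Some c)) - rdiff s (f None)) * LiP L (act f w) s * ((\<alpha> * \<delta> - \<beta> * \<gamma>) / (\<gamma> * z + \<delta>) ^ 2)
      = (rdiff z up - rdiff z uq) * LiP L (act f w) s"
  proof -
    have gen: "K * A = P - g \<Longrightarrow> K * B = Q - g \<Longrightarrow> (A - B) * X * K = (P - Q) * X" for K A B P Q g X :: complex
    proof -
      assume h: "K * A = P - g" "K * B = Q - g"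
      have "(A - B) * X * K = (K * A - K * B) * X" by (simp add: algebra_simps)
      then show ?thesis using h by simp
    qed
    have h1: "(\<alpha> * \<delta> - \<beta> * \<gamma>) / (\<gamma> * z + \<delta>) ^ 2 * rdiff s (f (Some c)) = rdiff z up - \<gamma> / (\<gamma> * z + \<delta>)"
      using mob_deriv_rdiff[OF det D sv upz] up unfolding sd by simp
    have h2: "(\<alpha> * \<delta> - \<beta> * \<gamma>) / (\<gamma> * z + \<delta>) ^ 2 * rdiff s (f None) = rdiff z uq - \<gamma> / (\<gamma> * z + \<delta>)"
      using mob_deriv_rdiff[OF det D sv uqz] uq unfolding sd by simp
    show ?thesis by (rule gen[OF h1 h2])
  qed
  have opn: "open {y. \<gamma> * y + \<delta> \<noteq> 0}"
    by (intro open_Collect_neq continuous_intros)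
  show ?thesis
    by (rule has_field_derivative_transform_within_open[OF dc[unfolded val] opn])
       (use D in \<open>auto simp: sd mob_app_def\<close>)
qed

end

lemma mobius_group_T:
  assumes "\<sigma> \<in> mobius_group S"
  shows "\<sigma> ` insert None (Some ` S) \<subseteq> insert None (Some ` S)"
        "inv \<sigma> ` insert None (Some ` S) \<subseteq> insert None (Some ` S)" "bij \<sigma>"
proof -
  let ?T = "insert None (Some ` S)"
  have eq: "\<sigma> ` ?T = ?T" and b: "bij \<sigma>" using assms mobius_bij by (auto simp: mobius_group_def)
  show "\<sigma> ` ?T \<subseteq> ?T" using eq by simp
  show "bij \<sigma>" using b .
  show "inv \<sigma> ` ?T \<subseteq> ?T"
  proof
    fix y assume "y \<in> inv \<sigma> ` ?T"
    then obtain x where x: "x \<in> ?T" "y = inv \<sigma> x" by auto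
    then obtain x' where "x' \<in> ?T" "x = \<sigma> x'" using eq by blast
    then show "y \<in> ?T" using x b by (simp add: bij_is_inj inv_f_f)
  qed
qed

theorem mainTheorem5:
  fixes S :: "complex set" and a b c z s :: complex
    and \<sigma> \<tau> :: "complex option \<Rightarrow> complex option"
    and w :: ncpoly and U V :: "complex set"
    and L :: "complex list \<Rightarrow> complex \<Rightarrow> complex"
  assumes "finite S" and "a \<in> S" and "b \<in> S" and "a \<noteq> b"
    and "\<sigma> \<in> mobius_group S" and "\<tau> \<in> mobius_group S"
    and "c \<in> S" and "poly_over S w"
    and "Li_domain S b U V" and "is_Li_ab S a b U V L"
    and "\<sigma> (Some z) = Some s" and "s \<in> U"
  shows "((\<lambda>y. LiP L (act (inv \<tau>) (pmul [(1, [c])] w)) (the (\<sigma> (Some y))))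
           has_field_derivative
           ((rdiff z (inv (\<tau> \<circ> \<sigma>) (Some c)) - rdiff z (inv (\<tau> \<circ> \<sigma>) None))
              * LiP L (act (inv \<tau>) w) s)) (at z)
       \<and> ((\<lambda>y. LiP L (act \<sigma> (pmul [(1, [c])] w)) (the (\<sigma> (Some y))))
           has_field_derivative (1 / (z - c) * LiP L (act \<sigma> w) s)) (at z)"
proof -
  interpret LiCtx S a b U V L using assms(1-4,9,10) by unfold_locales
  have sT: "\<sigma> ` insert None (Some ` S) \<subseteq> insert None (Some ` S)" "bij \<sigma>"
    using mobius_group_T[OF assms(5)] by auto
  have tT: "inv \<tau> ` insert None (Some ` S) \<subseteq> insert None (Some ` S)" "bij \<tau>"
    using mobius_group_T[OF assms(6)] by auto
  have inv_comp: "inv (\<tau> \<circ> \<sigma>) = inv \<sigma> \<circ> inv \<tau>" by (rule o_inv_distrib[OF tT(2) sT(2)])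
  have hback: "\<sigma> (inv (\<tau> \<circ> \<sigma>) x) = inv \<tau> x" for x
    unfolding inv_comp using sT(2) by (simp add: bij_is_surj surj_f_inv_f)
  have P1: "((\<lambda>y. LiP L (act (inv \<tau>) (pmul [(1, [c])] w)) (the (\<sigma> (Some y))))
           has_field_derivative
           ((rdiff z (inv (\<tau> \<circ> \<sigma>) (Some c)) - rdiff z (inv (\<tau> \<circ> \<sigma>) None))
              * LiP L (act (inv \<tau>) w) s)) (at z)"
    by (rule chain_main[OF assms(5) tT(1) assms(7) assms(8) assms(11) assms(12) hback hback])
  have P2: "((\<lambda>y. LiP L (act \<sigma> (pmul [(1, [c])] w)) (the (\<sigma> (Some y))))
           has_field_derivative ((rdiff z (Some c) - rdiff z None) * LiP L (act \<sigma> w) s)) (at z)"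
    by (rule chain_main[OF assms(5) sT(1) assms(7) assms(8) assms(11) assms(12) refl refl])
  show ?thesis using P1 P2 by simp
qed

end
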